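(* Let $\phi:\mathbb{R}^2\to\mathbb{R}^2$ be an invertible affine transformation and let $\sigma$ be the coordinatewise $\textsc{ReLU}$ on $\mathbb R^2$. Let $x\in\mathbb{R}^2$ and $\mathcal T\subset\mathbb{R}^2$ be such that $x$ lies in a bounded path-connected component of $\mathbb{R}^2\setminus\mathcal T$. Put $x^\prime:=\phi^{-1}\circ\sigma\circ\phi(x)$ and $\mathcal T^\prime:=\phi^{-1}\circ\sigma\circ\phi(\mathcal T)$. Then: (i) if $x^\prime=x$ and $x^\prime\notin\mathcal T^\prime$, then $x^\prime$ lies in a bounded path-connected component of $\mathbb R^2\setminus \mathcal T^\prime$; (ii) if $x^\prime\ne x$, then $x^\prime\in\mathcal T^\prime$.
   Context: $\sigma(x_1,x_2)=(\max\{x_1,0\},\max\{x_2,0\})$. *)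

theory Defs
  imports "HOL-Analysis.Analysis"
begin

definition relu2 :: "real^2 \<Rightarrow> real^2" where
  "relu2 x = (\<chi> i. max (x $ i) 0)"

definition invertible_affine :: "(real^2 \<Rightarrow> real^2) \<Rightarrow> bool" where
  "invertible_affine \<phi> \<longleftrightarrow> (\<exists>L c. linear L \<and> bij L \<and> \<phi> = (\<lambda>x. L x + c))"

definition in_bounded_component :: "real^2 \<Rightarrow> (real^2) set \<Rightarrow> bool" where
  "in_bounded_component x T \<longleftrightarrow> x \<in> - T \<and> bounded (path_component_set (- T) x)"

end

theory Submission
  imports Defs
begin

lemma relu2_nth [simp]: "relu2 x $ i = max (x $ i) 0"
  by (simp add: relu2_def)

lemma bounded_cont_image:
  fixes f :: "real^2 \<Rightarrow> real^2"
  assumes "continuous_on UNIV f" "bounded S"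
  shows "bounded (f ` S)"
proof -
  have "compact (f ` closure S)"
    using assms by (intro compact_continuous_image) (auto intro: continuous_on_subset simp: compact_closure)
  then show ?thesis
    by (meson bounded_subset closure_subset compact_imp_bounded image_mono)
qed

lemma pc_transport:
  fixes f :: "real^2 \<Rightarrow> real^2"
  assumes "continuous_on UNIV f" "f ` S \<subseteq> S'"
  shows "f ` path_component_set S x \<subseteq> path_component_set S' (f x)"
proof (cases "x \<in> S")
  case True
  have "path_connected (f ` path_component_set S x)"
    by (intro path_connected_continuous_image path_connected_path_component)
       (auto intro: continuous_on_subset[OF assms(1)])
  moreover have "f x \<in> f ` path_component_set S x"
    using True by (simp add: path_component_refl)
  moreover have "f ` path_component_set S x \<subseteq> S'"
    using assms(2) path_component_subset by blast
  ultimately show ?thesis by (intro path_component_maximal)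
next
  case False
  then show ?thesis using path_component_eq_empty by (metis empty_subsetI image_empty)
qed

lemma ray_lemma:
  fixes T :: "(real^2) set"
  assumes "bounded (path_component_set (-T) w0)" "w \<in> path_component_set (-T) w0" "w $ i \<le> 0"
  shows "relu2 w \<in> relu2 ` T"
proof (rule ccontr)
  assume nT: "relu2 w \<notin> relu2 ` T"
  define R where "R = (\<lambda>s::real. w - s *\<^sub>R axis i 1) ` {0..}"
  have rel: "relu2 (w - s *\<^sub>R axis i 1) = relu2 w" if "s \<ge> 0" for s
    using that assms(3) by (auto simp: vec_eq_iff axis_def)
  have RT: "R \<subseteq> -T"
    using nT rel unfolding R_def by (auto simp: image_iff)
  have "path_connected R"
    unfolding R_def
    by (intro path_connected_continuous_image convex_imp_path_connected)
       (auto intro!: continuous_intros simp: convex_real_interval)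
  moreover have "w \<in> R" unfolding R_def by (auto intro: image_eqI[where x=0])
  ultimately have "R \<subseteq> path_component_set (-T) w"
    using RT path_component_maximal by blast
  also have "\<dots> = path_component_set (-T) w0"
    using assms(2) by (metis path_component_eq)
  finally have "bounded R" using assms(1) bounded_subset by blast
  then obtain B where B: "\<And>r. r \<in> R \<Longrightarrow> norm r \<le> B"
    by (auto simp: bounded_iff)
  define s where "s = \<bar>B\<bar> + norm w + 1"
  have "w - s *\<^sub>R axis i 1 \<in> R" unfolding R_def s_def by auto
  hence "norm (w - s *\<^sub>R axis i 1) \<le> B" by (rule B)
  moreover have "norm (s *\<^sub>R axis i (1::real)) \<le> norm w + norm (w - s *\<^sub>R axis i 1)"
  proof -
    have "norm (s *\<^sub>R axis i (1::real)) = norm (w - (w - s *\<^sub>R axis i 1))" by simp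
    also have "\<dots> \<le> norm w + norm (w - s *\<^sub>R axis i 1)" by (rule norm_triangle_ineq4)
    finally show ?thesis .
  qed
  moreover have "norm (s *\<^sub>R axis i (1::real)) = s"
    unfolding s_def by simp
  ultimately show False unfolding s_def by linarith
qed

lemma core_ii:
  fixes T :: "(real^2) set"
  assumes "bounded (path_component_set (-T) x)" "x \<notin> T" "relu2 x \<noteq> x"
  shows "relu2 x \<in> relu2 ` T"
proof -
  have "\<exists>i. x $ i < 0"
    using assms(3) by (metis vec_eq_iff relu2_nth max.absorb1 not_le)
  then obtain i where "x $ i < 0" by blast
  then show ?thesis
    using ray_lemma[OF assms(1), of x i] assms(2) by (simp add: path_component_refl)
qed

lemma core_i:
  fixes T :: "(real^2) set"
  assumes "bounded (path_component_set (-T) x)" "x \<notin> T" "relu2 x = x" "x \<notin> relu2 ` T"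
  shows "bounded (path_component_set (-(relu2 ` T)) x)"
proof -
  define Q where "Q = {y::real^2. 0 \<le> y $ 1 \<and> 0 \<le> y $ 2}"
  have clQ: "closed Q" unfolding Q_def
    by (intro closed_Collect_conj closed_Collect_le) (auto intro!: continuous_intros)
  have intQ: "w \<in> interior Q" if "0 < w $ 1" "0 < w $ 2" for w
  proof -
    have "open {y::real^2. 0 < y $ 1 \<and> 0 < y $ 2}"
      by (intro open_Collect_conj open_Collect_less) (auto intro!: continuous_intros)
    moreover have "{y::real^2. 0 < y $ 1 \<and> 0 < y $ 2} \<subseteq> Q" unfolding Q_def by auto
    ultimately have "{y::real^2. 0 < y $ 1 \<and> 0 < y $ 2} \<subseteq> interior Q"
      by (intro interior_maximal)
    then show ?thesis using that by blast
  qed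
  have relQ: "relu2 q = q" if "q \<in> Q" for q
    using that unfolding Q_def vec_eq_iff forall_2 by simp
  have QT: "Q \<inter> -(relu2 ` T) \<subseteq> -T"
  proof
    fix q assume q: "q \<in> Q \<inter> -(relu2 ` T)"
    show "q \<in> -T"
    proof
      assume "q \<in> T"
      hence "relu2 q \<in> relu2 ` T" by (rule imageI)
      thus False using q relQ[of q] by simp
    qed
  qed
  have xi: "max (x $ i) 0 = x $ i" for i using assms(3) relu2_nth[of x i] by simp
  have xQ: "x \<in> Q" unfolding Q_def using xi[of 1] xi[of 2] by (simp add: max_def split: if_splits)
  have PQ: "path_component_set (-(relu2 ` T)) x \<subseteq> Q"
  proof
    fix y assume "y \<in> path_component_set (-(relu2 ` T)) x"
    then obtain g where g: "path g" "path_image g \<subseteq> -(relu2 ` T)" "pathstart g = x" "pathfinish g = y"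
      by (auto simp: path_component_def)
    show "y \<in> Q"
    proof (rule ccontr)
      assume "y \<notin> Q"
      then obtain h where h: "path h" "pathstart h = pathstart g" "path_image h \<subseteq> path_image g \<inter> Q"
          "pathfinish h \<in> frontier Q"
        using exists_path_subpath_to_frontier_closed[OF clQ g(1)] g(3,4) xQ by blast
      define w where "w = pathfinish h"
      have "path_image h \<subseteq> -T" using h(3) g(2) QT by blast
      hence wC: "w \<in> path_component_set (-T) x"
        using h g(3) unfolding w_def path_component_def by auto
      have wQ: "w \<in> Q" using h(4) clQ w_def by (simp add: frontier_def)
      have "w \<notin> interior Q" using h(4) w_def by (simp add: frontier_def)
      hence "w $ 1 \<le> 0 \<or> w $ 2 \<le> 0" using intQ by (meson not_le)
      hence "relu2 w \<in> relu2 ` T" using ray_lemma[OF assms(1) wC] by blast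
      moreover have "w \<in> path_image g" using h(3) w_def pathfinish_in_path_image[of h] by blast
      ultimately show False using g(2) relQ[OF wQ] by auto
    qed
  qed
  have "path_component_set (-(relu2 ` T)) x \<subseteq> path_component_set (-T) x"
  proof (cases "x \<in> -(relu2 ` T)")
    case True
    show ?thesis
      apply (rule path_component_maximal)
      using True apply (simp add: path_component_refl)
      apply (rule path_connected_path_component)
      using PQ QT path_component_subset by blast
  next
    case False then show ?thesis using path_component_eq_empty by (metis empty_subsetI image_empty)
  qed
  then show ?thesis using assms(1) bounded_subset by blast
qed

theorem lemma2:
  fixes \<phi> :: "real^2 \<Rightarrow> real^2" and x :: "real^2" and T :: "(real^2) set"
  assumes "invertible_affine \<phi>"
    and "in_bounded_component x T"
  shows "(inv \<phi> (relu2 (\<phi> x)) = x \<and> inv \<phi> (relu2 (\<phi> x)) \<notin> (inv \<phi> \<circ> relu2 \<circ> \<phi>) ` T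
           \<longrightarrow> in_bounded_component (inv \<phi> (relu2 (\<phi> x))) ((inv \<phi> \<circ> relu2 \<circ> \<phi>) ` T))
       \<and> (inv \<phi> (relu2 (\<phi> x)) \<noteq> x \<longrightarrow> inv \<phi> (relu2 (\<phi> x)) \<in> (inv \<phi> \<circ> relu2 \<circ> \<phi>) ` T)"
proof -
  obtain L c where L: "linear L" "bij L" and phi: "\<phi> = (\<lambda>x. L x + c)"
    using assms(1) unfolding invertible_affine_def by blast
  have bl: "bounded_linear L" using L(1) by (simp add: linear_conv_bounded_linear)
  have injL: "inj L" using L(2) bij_is_inj by blast
  have bli: "bounded_linear (inv L)" by (rule inj_linear_imp_inv_bounded_linear[OF bl injL])
  have injp: "inj \<phi>" unfolding phi using injL by (auto simp: inj_def)
  have right: "\<phi> (inv L (y - c)) = y" for y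
    unfolding phi using L(2) by (simp add: bij_is_surj surj_f_inv_f)
  have invp: "inv \<phi> = (\<lambda>y. inv L (y - c))"
    by (rule ext, rule inv_f_eq[OF injp right])
  have cp: "continuous_on UNIV \<phi>" unfolding phi
    using bl by (intro continuous_intros) (simp add: linear_continuous_on)
  have ci0: "continuous_on UNIV (inv L)" by (rule linear_continuous_on[OF bli])
  have ci1: "continuous_on UNIV (inv L \<circ> (\<lambda>y. y - c))"
    by (rule continuous_on_compose) (auto intro!: continuous_intros intro: continuous_on_subset[OF ci0])
  have ci: "continuous_on UNIV (inv \<phi>)" using ci1 unfolding invp by (simp add: o_def)
  have li [simp]: "inv \<phi> (\<phi> z) = z" for z using injp by simp
  have ri [simp]: "\<phi> (inv \<phi> z) = z" for z using right invp by simp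
  define x1 where "x1 = \<phi> x"
  define T1 where "T1 = \<phi> ` T"
  have xT: "x \<notin> T" and bC: "bounded (path_component_set (-T) x)"
    using assms(2) unfolding in_bounded_component_def by auto
  have x1T: "x1 \<notin> T1" unfolding x1_def T1_def using xT injp by (auto simp: inj_image_mem_iff)
  have "inv \<phi> ` path_component_set (-T1) x1 \<subseteq> path_component_set (-T) (inv \<phi> x1)"
  proof (rule pc_transport[OF ci])
    show "inv \<phi> ` (-T1) \<subseteq> -T"
    proof
      fix z assume "z \<in> inv \<phi> ` (-T1)"
      then obtain y where y: "y \<notin> T1" "z = inv \<phi> y" by auto
      show "z \<in> -T"
      proof
        assume "z \<in> T"
        hence "\<phi> z \<in> T1" unfolding T1_def by blast
        thus False using y ri[of y] by simp
      qed
    qed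
  qed
  hence "path_component_set (-T1) x1 \<subseteq> \<phi> ` path_component_set (-T) x"
  proof -
    assume sub: "inv \<phi> ` path_component_set (-T1) x1 \<subseteq> path_component_set (-T) (inv \<phi> x1)"
    show ?thesis
    proof
      fix y assume "y \<in> path_component_set (-T1) x1"
      hence "inv \<phi> y \<in> path_component_set (-T) x" using sub unfolding x1_def by auto
      hence "\<phi> (inv \<phi> y) \<in> \<phi> ` path_component_set (-T) x" by (rule imageI)
      thus "y \<in> \<phi> ` path_component_set (-T) x" by simp
    qed
  qed
  hence bC1: "bounded (path_component_set (-T1) x1)"
    by (rule bounded_subset[OF bounded_cont_image[OF cp bC]])
  have img: "(inv \<phi> \<circ> relu2 \<circ> \<phi>) ` T = inv \<phi> ` relu2 ` T1"
    unfolding T1_def by (simp add: image_comp)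
  have eqg: "inv \<phi> a = b \<longleftrightarrow> a = \<phi> b" for a b
  proof
    assume "inv \<phi> a = b" thus "a = \<phi> b" using ri[of a] by simp
  next
    assume "a = \<phi> b" thus "inv \<phi> a = b" by simp
  qed
  have eqx: "inv \<phi> (relu2 x1) = x \<longleftrightarrow> relu2 x1 = x1"
    unfolding x1_def by (rule eqg)
  have injinv: "inj (inv \<phi>)"
  proof (rule injI)
    fix a b assume "inv \<phi> a = inv \<phi> b"
    hence "\<phi> (inv \<phi> a) = \<phi> (inv \<phi> b)" by simp
    thus "a = b" by simp
  qed
  have memi: "inv \<phi> y \<in> inv \<phi> ` S \<longleftrightarrow> y \<in> S" for y S
    by (rule inj_image_mem_iff[OF injinv])
  show ?thesis
    unfolding x1_def[symmetric] img
  proof (intro conjI impI)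
    assume "inv \<phi> (relu2 x1) \<noteq> x"
    hence "relu2 x1 \<noteq> x1" using eqx by blast
    hence "relu2 x1 \<in> relu2 ` T1" using core_ii[OF bC1 x1T] by blast
    thus "inv \<phi> (relu2 x1) \<in> inv \<phi> ` relu2 ` T1" by blast
  next
    assume a: "inv \<phi> (relu2 x1) = x \<and> inv \<phi> (relu2 x1) \<notin> inv \<phi> ` relu2 ` T1"
    hence r: "relu2 x1 = x1" using eqx by (meson conjunct1)
    have n: "x1 \<notin> relu2 ` T1"
    proof
      assume "x1 \<in> relu2 ` T1"
      hence "inv \<phi> (relu2 x1) \<in> inv \<phi> ` relu2 ` T1" using r by simp
      with conjunct2[OF a] show False by contradiction
    qed
    define S where "S = relu2 ` T1"
    have bP: "bounded (path_component_set (-S) x1)"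
      unfolding S_def by (rule core_i[OF bC1 x1T r n])
    have "\<phi> ` path_component_set (-(inv \<phi> ` S)) x \<subseteq> path_component_set (-S) (\<phi> x)"
    proof (rule pc_transport[OF cp])
      show "\<phi> ` (-(inv \<phi> ` S)) \<subseteq> -S"
      proof
        fix z assume "z \<in> \<phi> ` (-(inv \<phi> ` S))"
        then obtain y where y: "y \<notin> inv \<phi> ` S" "z = \<phi> y" by auto
        show "z \<in> -S" using y memi[of "\<phi> y" S] by simp
      qed
    qed
    hence "path_component_set (-(inv \<phi> ` S)) x \<subseteq> inv \<phi> ` path_component_set (-S) x1"
    proof -
      assume sub: "\<phi> ` path_component_set (-(inv \<phi> ` S)) x \<subseteq> path_component_set (-S) (\<phi> x)"
      show ?thesis
      proof
        fix y assume "y \<in> path_component_set (-(inv \<phi> ` S)) x"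
        hence "\<phi> y \<in> path_component_set (-S) x1" using sub unfolding x1_def by auto
        hence "inv \<phi> (\<phi> y) \<in> inv \<phi> ` path_component_set (-S) x1" by (rule imageI)
        thus "y \<in> inv \<phi> ` path_component_set (-S) x1" by simp
      qed
    qed
    hence "bounded (path_component_set (-(inv \<phi> ` S)) x)"
      by (rule bounded_subset[OF bounded_cont_image[OF ci bP]])
    moreover have "x \<notin> inv \<phi> ` S"
    proof
      assume "x \<in> inv \<phi> ` S"
      hence "inv \<phi> x1 \<in> inv \<phi> ` S" unfolding x1_def by simp
      hence "x1 \<in> S" by (simp only: memi)
      thus False using n unfolding S_def by simp
    qed
    ultimately have fin: "x \<in> - (inv \<phi> ` S) \<and> bounded (path_component_set (-(inv \<phi> ` S)) x)"
      by blast
    have ax: "inv \<phi> (relu2 x1) = x" using a by (rule conjunct1)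
    show "in_bounded_component (inv \<phi> (relu2 x1)) (inv \<phi> ` relu2 ` T1)"
      unfolding in_bounded_component_def ax S_def[symmetric] by (rule fin)
  qed
qed

end
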